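(* Let $f:\mathbb{R}^n\to\mathbb{R}$ and let $U\subseteq\mathbb{R}^n$ be a nonempty open convex set. Suppose $f$ and $-f$ are prox-bounded with thresholds $\lambda_f,\lambda_{-f}>0$, and $0<1/L<\min\{\lambda_f,\lambda_{-f}\}$. Then the following are equivalent: (a) $\partial_p^{1/L}f(x)\ne\varnothing$ and $\partial_p^{1/L}(-f)(x)\ne\varnothing$ for all $x\in U$; (b) $\partial_F(Lj+f)(x)\ne\varnothing$ and $\partial_F(Lj-f)(x)\ne\varnothing$ for all $x\in U$; (c) $f$ is differentiable on $U$ and $|f(y)-f(x)-\langle\nabla f(x),y-x\rangle|\le\frac L2\|y-x\|^2$ for all $y\in\mathbb{R}^n$ and $x\in U$. When one of these holds, $\nabla f$ is $L$-Lipschitz on $U$.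
   Context: $j:=\frac12\|\cdot\|^2$. Prox-bounded with threshold $\lambda_f=\sup\{\lambda>0:\inf_y\{f(y)+\frac1{2\lambda}\|y-x\|^2\}>-\infty\text{ for some }x\}$. $v\in\partial_p^\lambda f(x)$ iff $f(y)\ge f(x)+\langle v,y-x\rangle-\frac1{2\lambda}\|y-x\|^2$ for all $y$. Fenchel subdifferential: $v\in\partial_F g(x)$ iff $g(y)\ge g(x)+\langle v,y-x\rangle$ for all $y$. *)

theory Defs
  imports "HOL-Analysis.Analysis"
begin

definition jfun :: "'a::real_normed_vector \<Rightarrow> real" where
  "jfun x = (norm x)^2 / 2"

definition prox_bounded_with :: "('a::real_normed_vector \<Rightarrow> real) \<Rightarrow> real \<Rightarrow> bool" where
  "prox_bounded_with f lam \<longleftrightarrow>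
     (\<exists>x. bdd_below (range (\<lambda>y. f y + 1 / (2 * lam) * (norm (y - x))^2)))"

text \<open>prox-boundedness threshold (an extended real; the sup of the empty set is 0 here,
  i.e. f is prox-bounded iff the threshold is positive)\<close>
definition prox_threshold :: "('a::real_normed_vector \<Rightarrow> real) \<Rightarrow> ereal" where
  "prox_threshold f = Sup (ereal ` {lam. lam > 0 \<and> prox_bounded_with f lam})"

definition prox_bounded :: "('a::real_normed_vector \<Rightarrow> real) \<Rightarrow> bool" where
  "prox_bounded f \<longleftrightarrow> (\<exists>lam>0. prox_bounded_with f lam)"

definition prox_subdiff :: "real \<Rightarrow> ('a::real_inner \<Rightarrow> real) \<Rightarrow> 'a \<Rightarrow> 'a set" where
  "prox_subdiff lam f x =
     {v. \<forall>y. f y \<ge> f x + inner v (y - x) - 1 / (2 * lam) * (norm (y - x))^2}"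

definition fenchel_subdiff :: "('a::real_inner \<Rightarrow> real) \<Rightarrow> 'a \<Rightarrow> 'a set" where
  "fenchel_subdiff g x = {v. \<forall>y. g y \<ge> g x + inner v (y - x)}"

definition grad :: "('a::euclidean_space \<Rightarrow> real) \<Rightarrow> 'a \<Rightarrow> 'a" where
  "grad f x = (\<Sum>b\<in>Basis. frechet_derivative f (at x) b *\<^sub>R b)"

end

theory Submission
  imports Defs
begin



lemma jfun_id: "jfun (y::'a::real_inner) - jfun x = inner x (y - x) + (norm (y-x))^2/2"
  unfolding jfun_def power2_norm_eq_inner
  apply (simp add: inner_diff_left inner_diff_right inner_commute)
  apply (simp add: field_simps)
  done

lemma prox_fenchel:
  fixes g :: "'a::real_inner \<Rightarrow> real"
  assumes L: "L > 0"
  shows "v \<in> prox_subdiff (1/L) g x \<longleftrightarrow> v + L *\<^sub>R x \<in> fenchel_subdiff (\<lambda>z. L * jfun z + g z) x"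
proof -
  have e: "1 / (2 * (1/L)) = L/2" using L by simp
  have "\<And>y. (g y \<ge> g x + inner v (y - x) - L/2 * (norm (y - x))^2) \<longleftrightarrow>
      (L * jfun y + g y \<ge> L * jfun x + g x + inner (v + L *\<^sub>R x) (y - x))"
  proof -
    fix y
    have "L * jfun y = L * jfun x + L * inner x (y - x) + L/2 * (norm (y-x))^2"
    proof -
      have "L * (jfun y - jfun x) = L * (inner x (y - x) + (norm (y-x))^2/2)"
        using jfun_id[of y x] by simp
      then show ?thesis by (simp add: algebra_simps)
    qed
    then show "?thesis y" by (simp add: inner_add_left algebra_simps)
  qed
  then show ?thesis unfolding prox_subdiff_def fenchel_subdiff_def e by simp
qed

lemma prox_fenchel_ne:
  fixes g :: "'a::real_inner \<Rightarrow> real"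
  assumes L: "L > 0"
  shows "prox_subdiff (1/L) g x \<noteq> {} \<longleftrightarrow> fenchel_subdiff (\<lambda>z. L * jfun z + g z) x \<noteq> {}"
proof
  assume "prox_subdiff (1/L) g x \<noteq> {}"
  then obtain v where "v \<in> prox_subdiff (1/L) g x" by blast
  then show "fenchel_subdiff (\<lambda>z. L * jfun z + g z) x \<noteq> {}" using prox_fenchel[OF L] by blast
next
  assume "fenchel_subdiff (\<lambda>z. L * jfun z + g z) x \<noteq> {}"
  then obtain u where "u \<in> fenchel_subdiff (\<lambda>z. L * jfun z + g z) x" by blast
  then have "(u - L *\<^sub>R x) + L *\<^sub>R x \<in> fenchel_subdiff (\<lambda>z. L * jfun z + g z) x" by simp
  then show "prox_subdiff (1/L) g x \<noteq> {}" using prox_fenchel[OF L] by blast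
qed

lemma prox_pair:
  fixes f :: "'a::real_inner \<Rightarrow> real"
  assumes L: "L > 0" and v: "v \<in> prox_subdiff (1/L) f x" and w: "w \<in> prox_subdiff (1/L) (\<lambda>z. - f z) x"
  shows "w = - v" and "\<forall>y. \<bar>f y - f x - inner v (y - x)\<bar> \<le> L/2 * (norm (y-x))^2"
proof -
  have e: "1 / (2 * (1/L)) = L/2" using L by simp
  have v': "\<And>y. f y \<ge> f x + inner v (y - x) - L/2 * (norm (y - x))^2"
    using v unfolding prox_subdiff_def e by blast
  have w': "\<And>y. - f y \<ge> - f x + inner w (y - x) - L/2 * (norm (y - x))^2"
    using w unfolding prox_subdiff_def e by blast
  define h where "h = (1/(2*L)) *\<^sub>R (v + w)"
  have "0 \<ge> inner (v + w) h - L * (norm h)^2"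
    using v'[of "x + h"] w'[of "x + h"] by (simp add: inner_add_left)
  also have "inner (v + w) h - L * (norm h)^2 = (norm (v+w))^2 / (4*L)"
  proof -
    have "inner (v + w) h = (1/(2*L)) * (norm (v+w))^2"
      unfolding h_def by (simp add: power2_norm_eq_inner)
    moreover have "(norm h)^2 = (1/(2*L))^2 * (norm (v+w))^2"
      unfolding h_def using L by (simp add: power_divide)
    ultimately show ?thesis using L by (simp add: field_simps power2_eq_square)
  qed
  finally have "(norm (v+w))^2 / (4*L) \<le> 0" .
  then have "(norm (v+w))^2 \<le> 0" using L by (simp add: divide_le_0_iff)
  then have "norm (v + w) = 0" by simp
  then show wv: "w = - v" by (simp add: add_eq_0_iff2 add.commute)
  show "\<forall>y. \<bar>f y - f x - inner v (y - x)\<bar> \<le> L/2 * (norm (y-x))^2"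
  proof
    fix y
    show "\<bar>f y - f x - inner v (y - x)\<bar> \<le> L/2 * (norm (y-x))^2"
      unfolding abs_le_iff using v'[of y] w'[of y] wv by (simp add: inner_minus_left)
  qed
qed

lemma quad_deriv:
  fixes f :: "'a::real_inner \<Rightarrow> real"
  assumes L: "L > 0" and q: "\<forall>y. \<bar>f y - f x - inner v (y - x)\<bar> \<le> L/2 * (norm (y-x))^2"
  shows "(f has_derivative inner v) (at x)"
  unfolding has_derivative_at_alt
proof (intro conjI allI impI)
  show "bounded_linear (inner v)" by (rule bounded_linear_inner_right)
  fix e :: real assume e: "e > 0"
  show "\<exists>d>0. \<forall>y. norm (y - x) < d \<longrightarrow> norm (f y - f x - inner v (y - x)) \<le> e * norm (y - x)"
  proof (intro exI[of _ "2*e/L"] conjI allI impI)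
    show "2*e/L > 0" using e L by simp
    fix y assume y: "norm (y - x) < 2*e/L"
    have "norm (f y - f x - inner v (y - x)) \<le> L/2 * (norm (y-x))^2" using q by simp
    also have "\<dots> = (L/2 * norm (y-x)) * norm (y - x)" by (simp add: power2_eq_square)
    also have "\<dots> \<le> e * norm (y - x)"
      by (rule mult_right_mono) (use y L in \<open>auto simp: field_simps\<close>)
    finally show "norm (f y - f x - inner v (y - x)) \<le> e * norm (y - x)" .
  qed
qed

lemma grad_eq:
  fixes f :: "'a::euclidean_space \<Rightarrow> real"
  assumes "(f has_derivative inner v) (at x)"
  shows "grad f x = v"
proof -
  have "frechet_derivative f (at x) = inner v" using frechet_derivative_at[OF assms] by simp
  then have "grad f x = (\<Sum>b\<in>Basis. (inner v b) *\<^sub>R b)"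
    unfolding grad_def by simp
  also have "\<dots> = v" by (rule euclidean_representation)
  finally show ?thesis .
qed

lemma quad_lip:
  fixes f :: "'a::real_inner \<Rightarrow> real"
  assumes L: "L > 0"
    and qx: "\<forall>y. \<bar>f y - f x - inner g (y - x)\<bar> \<le> L/2 * (norm (y-x))^2"
    and qx': "\<forall>y. \<bar>f y - f x' - inner g' (y - x')\<bar> \<le> L/2 * (norm (y-x'))^2"
  shows "norm (g' - g) \<le> L * norm (x' - x)"
proof -
  define d where "d = x' - x"
  define e where "e = g' - g"
  define k where "k = 1 / (2*L)"
  define u where "u = k *\<^sub>R (e - L *\<^sub>R d)"
  have x': "x' = x + d" by (simp add: d_def)
  have i1: "f (x'+u) - f x - inner g (d+u) \<le> L/2 * (norm (d+u))^2"
  proof -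
    have "x' + u - x = d + u" unfolding x' by simp
    then show ?thesis using qx[rule_format, of "x'+u"]
      by (simp only: abs_le_iff)
  qed
  have i2: "f (x'+u) - f x' - inner g' u \<ge> - (L/2 * (norm u)^2)"
    using qx'[rule_format, of "x'+u"] by (simp only: abs_le_iff add_diff_cancel_left') linarith
  have i3: "f (x-u) - f x' + inner g' (u+d) \<le> L/2 * (norm (u+d))^2"
  proof -
    have "x - u - x' = - (u + d)" unfolding x' by simp
    then show ?thesis using qx'[rule_format, of "x-u"]
      by (simp only: norm_minus_cancel inner_minus_right abs_le_iff) linarith
  qed
  have i4: "f (x-u) - f x + inner g u \<ge> - (L/2 * (norm u)^2)"
  proof -
    have "x - u - x = - u" by simp
    then show ?thesis using qx[rule_format, of "x-u"]
      by (simp only: norm_minus_cancel inner_minus_right abs_le_iff) linarith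
  qed
  have nd: "norm (u+d) = norm (d+u)" by (simp add: add.commute)
  have s: "0 \<le> - inner e d - 2 * inner e u + L * ((norm (d+u))^2 + (norm u)^2)"
    using i1 i2 i3 i4 unfolding nd e_def
    by (simp add: inner_add_right inner_diff_left algebra_simps)
  define a where "a = inner e e"
  define b where "b = inner e d"
  define c where "c = inner d d"
  have eu: "inner e u = k * (a - L * b)"
    unfolding u_def a_def b_def by (simp add: inner_diff_right algebra_simps)
  have du: "inner d u = k * (b - L * c)"
    unfolding u_def b_def c_def by (simp add: inner_diff_right inner_commute algebra_simps)
  have uu: "inner u u = k^2 * (a - 2 * L * b + L^2 * c)"
    unfolding u_def a_def b_def c_def
    by (simp add: inner_diff_right inner_diff_left inner_commute algebra_simps power2_eq_square)
  have n1: "(norm (d+u))^2 = c + 2 * inner d u + inner u u"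
    unfolding power2_norm_eq_inner c_def by (simp add: inner_add_right inner_add_left inner_commute)
  have n2: "(norm u)^2 = inner u u" by (simp add: power2_norm_eq_inner)
  have "0 \<le> - b - 2 * (k * (a - L * b)) + L * (c + 2 * (k * (b - L * c)) + 2 * (k^2 * (a - 2 * L * b + L^2 * c)))"
    using s unfolding n1 n2 eu du uu b_def by (simp add: algebra_simps)
  also have "\<dots> = (L^2 * c - a) / (2 * L)"
    using L unfolding k_def by (simp add: field_simps power2_eq_square)
  finally have "a \<le> L^2 * c" using L by (simp add: divide_nonneg_pos zero_le_divide_iff)
  then have "(norm e)^2 \<le> (L * norm d)^2"
  proof -
    have e1: "(norm e)^2 = a" unfolding a_def by (rule power2_norm_eq_inner)
    have e2: "(norm d)^2 = c" unfolding c_def by (rule power2_norm_eq_inner)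
    have e3: "(L * norm d)^2 = L^2 * (norm d)^2" by (rule power_mult_distrib)
    show ?thesis unfolding e3 e2 e1 by (rule \<open>a \<le> L^2 * c\<close>)
  qed
  then have "norm e \<le> L * norm d"
  proof (rule power2_le_imp_le)
    show "0 \<le> L * norm d" using L by simp
  qed
  then show ?thesis unfolding e_def d_def .
qed

theorem mainTheorem13:
  fixes f :: "'a::euclidean_space \<Rightarrow> real"
    and U :: "'a set" and L :: real
  assumes "U \<noteq> {}" and "open U" and "convex U"
    and "prox_bounded f" and "prox_bounded (\<lambda>x. - f x)"
    and "prox_threshold f > 0" and "prox_threshold (\<lambda>x. - f x) > 0"
    and "L > 0"
    and "ereal (1 / L) < min (prox_threshold f) (prox_threshold (\<lambda>x. - f x))"
  defines "A \<equiv> (\<forall>x\<in>U. prox_subdiff (1 / L) f x \<noteq> {} \<and>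
                         prox_subdiff (1 / L) (\<lambda>z. - f z) x \<noteq> {})"
    and "B \<equiv> (\<forall>x\<in>U. fenchel_subdiff (\<lambda>z. L * jfun z + f z) x \<noteq> {} \<and>
                         fenchel_subdiff (\<lambda>z. L * jfun z - f z) x \<noteq> {})"
    and "C \<equiv> ((\<forall>x\<in>U. f differentiable (at x)) \<and>
              (\<forall>x\<in>U. \<forall>y. \<bar>f y - f x - inner (grad f x) (y - x)\<bar> \<le> L / 2 * (norm (y - x))^2))"
  shows "(A \<longleftrightarrow> B) \<and> (B \<longleftrightarrow> C) \<and> ((A \<or> B \<or> C) \<longrightarrow> L-lipschitz_on U (grad f))"
  proof -
  have L: "L > 0" by fact
  have AB: "A \<longleftrightarrow> B"
  proof -
    have "\<And>x. prox_subdiff (1 / L) (\<lambda>z. - f z) x \<noteq> {} \<longleftrightarrow>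
                fenchel_subdiff (\<lambda>z. L * jfun z - f z) x \<noteq> {}"
      using prox_fenchel_ne[OF L, of "\<lambda>z. - f z"] by simp
    then show ?thesis unfolding A_def B_def using prox_fenchel_ne[OF L, of f] by simp
  qed
  have AC: "A \<Longrightarrow> C"
  proof -
    assume A: A
    have *: "\<And>x. x \<in> U \<Longrightarrow> (f has_derivative inner (grad f x)) (at x) \<and>
        (\<forall>y. \<bar>f y - f x - inner (grad f x) (y - x)\<bar> \<le> L / 2 * (norm (y - x))^2)"
    proof -
      fix x assume x: "x \<in> U"
      obtain v w where v: "v \<in> prox_subdiff (1/L) f x"
        and w: "w \<in> prox_subdiff (1/L) (\<lambda>z. - f z) x"
        using A x unfolding A_def by blast
      have q: "\<forall>y. \<bar>f y - f x - inner v (y - x)\<bar> \<le> L/2 * (norm (y-x))^2"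
        using prox_pair(2)[OF L v w] .
      have d: "(f has_derivative inner v) (at x)" using quad_deriv[OF L q] .
      have "grad f x = v" using grad_eq[OF d] .
      then show "?thesis x" using d q by simp
    qed
    show C unfolding C_def using * by (auto simp: differentiable_def)
  qed
  have CA: "C \<Longrightarrow> A"
  proof -
    assume C: C
    show A unfolding A_def
    proof (intro ballI conjI)
      fix x assume x: "x \<in> U"
      have q: "\<And>y. \<bar>f y - f x - inner (grad f x) (y - x)\<bar> \<le> L/2 * (norm (y-x))^2"
        using C x unfolding C_def by blast
      have e: "1 / (2 * (1/L)) = L/2" using L by simp
      have "grad f x \<in> prox_subdiff (1/L) f x"
        unfolding prox_subdiff_def e
      proof (intro CollectI allI)
        fix y show "f y \<ge> f x + inner (grad f x) (y - x) - L/2 * (norm (y - x))^2"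
          using q[of y] unfolding abs_le_iff by linarith
      qed
      then show "prox_subdiff (1/L) f x \<noteq> {}" by blast
      have "- grad f x \<in> prox_subdiff (1/L) (\<lambda>z. - f z) x"
        unfolding prox_subdiff_def e
      proof (intro CollectI allI)
        fix y show "- f y \<ge> - f x + inner (- grad f x) (y - x) - L/2 * (norm (y - x))^2"
          using q[of y] unfolding abs_le_iff inner_minus_left by linarith
      qed
      then show "prox_subdiff (1/L) (\<lambda>z. - f z) x \<noteq> {}" by blast
    qed
  qed
  have lip: "C \<Longrightarrow> L-lipschitz_on U (grad f)"
  proof -
    assume C: C
    show ?thesis
    proof (rule lipschitz_onI)
      fix x y assume x: "x \<in> U" and y: "y \<in> U"
      have "norm (grad f x - grad f y) \<le> L * norm (x - y)"
        by (rule quad_lip[OF L]) (use C x y in \<open>auto simp: C_def\<close>)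
      then show "dist (grad f x) (grad f y) \<le> L * dist x y" by (simp add: dist_norm)
    next
      show "0 \<le> L" using L by simp
    qed
  qed
  show ?thesis using AB AC CA lip by blast
qed

end
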